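(* Let $H=(V,E)$ be a graph and let $\theta\in(\mathbb{S}^1)^V$ be a stable state on $H$ with $\rho_1(\theta)\in[0,1]$. Then for all $0<\gamma<\beta\le\pi/2$, \[e(\mathcal{C}_\beta,\mathcal{C}_\beta)\ \ge\ e(\mathcal{C}_{\pi/2},\mathcal{C}_\beta)\ \ge\ \sin(\beta-\gamma)\, e(\mathcal{C}_\beta,\mathcal{C}_\gamma^c).\]
   Context: For a graph $H$ with adjacency matrix $A$, $\mathcal{E}_H(\theta)=\frac12\sum_{u,v\in V}A_{u,v}(1-\cos(\theta_u-\theta_v))$ for $\theta\in(\mathbb{S}^1)^V$. A stable state is $\theta$ with $\nabla\mathcal{E}_H(\theta)=0$ and $\nabla^2\mathcal{E}_H(\theta)$ positive semidefinite. $\rho_1(\theta)=|V|^{-1}\sum_{v\in V}e^{i\theta_v}$. Viewing $\mathbb{S}^1$ as $(-\pi,\pi]$, $\mathcal{C}_\beta=\{v\in V:|\theta_v|\ge\beta\}$ and $\mathcal{C}_\gamma^c=V\setminus\mathcal{C}_\gamma$. For $X,Y\subseteq V$, $e(X,Y)=\sum_{x\in X,y\in Y}A_{x,y}$. *)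

theory Defs
  imports "HOL-Analysis.Analysis"
begin

definition is_graph_adj :: "('v::finite \<Rightarrow> 'v \<Rightarrow> real) \<Rightarrow> bool" where
  "is_graph_adj A \<longleftrightarrow> (\<forall>u v. A u v = 0 \<or> A u v = 1) \<and> (\<forall>u v. A u v = A v u) \<and> (\<forall>v. A v v = 0)"

text \<open>Kuramoto energy, on lifts of configurations in (S^1)^V to R^V.\<close>
definition energy :: "('v::finite \<Rightarrow> 'v \<Rightarrow> real) \<Rightarrow> real^'v \<Rightarrow> real" where
  "energy A \<theta> = (1/2) * (\<Sum>u\<in>UNIV. \<Sum>v\<in>UNIV. A u v * (1 - cos (\<theta>$u - \<theta>$v)))"

text \<open>Stable state: vanishing gradient and positive semidefinite Hessian
  (h^T Hess h = second derivative of t \<mapsto> E(\<theta> + t h) at 0).\<close>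
definition stable_state :: "('v::finite \<Rightarrow> 'v \<Rightarrow> real) \<Rightarrow> real^'v \<Rightarrow> bool" where
  "stable_state A \<theta> \<longleftrightarrow>
     (energy A has_derivative (\<lambda>h. 0)) (at \<theta>) \<and>
     (\<forall>h::real^'v. deriv (deriv (\<lambda>t. energy A (\<theta> + t *\<^sub>R h))) 0 \<ge> 0)"

definition rho1 :: "real^'v::finite \<Rightarrow> complex" where
  "rho1 \<theta> = (1 / of_nat CARD('v)) * (\<Sum>v\<in>UNIV. cis (\<theta>$v))"

definition Cset :: "real^'v::finite \<Rightarrow> real \<Rightarrow> 'v set" where
  "Cset \<theta> \<beta> = {v. \<bar>\<theta>$v\<bar> \<ge> \<beta>}"

definition edges_between :: "('v \<Rightarrow> 'v \<Rightarrow> real) \<Rightarrow> 'v set \<Rightarrow> 'v set \<Rightarrow> real" where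
  "edges_between A X Y = (\<Sum>x\<in>X. \<Sum>y\<in>Y. A x y)"

end

theory Submission
  imports Defs
begin

lemma line_eq:
  fixes A :: "'v::finite \<Rightarrow> 'v \<Rightarrow> real"
  shows "energy A (\<theta> + t *\<^sub>R h) = 1/2 * (\<Sum>u\<in>UNIV. \<Sum>v\<in>UNIV. A u v * (1 - cos ((\<theta>$u - \<theta>$v) + t * (h$u - h$v))))"
  by (simp add: energy_def algebra_simps)

lemma d1:
  fixes A :: "'v::finite \<Rightarrow> 'v \<Rightarrow> real"
  shows "((\<lambda>t. energy A (\<theta> + t *\<^sub>R h)) has_real_derivative
    (1/2 * (\<Sum>u\<in>UNIV. \<Sum>v\<in>UNIV. A u v * (sin ((\<theta>$u - \<theta>$v) + t * (h$u - h$v)) * (h$u - h$v))))) (at t)"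
  unfolding line_eq
  by (auto intro!: derivative_eq_intros simp: mult_ac)

lemma d2:
  fixes A :: "'v::finite \<Rightarrow> 'v \<Rightarrow> real"
  shows "((\<lambda>t. 1/2 * (\<Sum>u\<in>UNIV. \<Sum>v\<in>UNIV. A u v * (sin ((\<theta>$u - \<theta>$v) + t * (h$u - h$v)) * (h$u - h$v)))) has_real_derivative
    (1/2 * (\<Sum>u\<in>UNIV. \<Sum>v\<in>UNIV. A u v * (cos ((\<theta>$u - \<theta>$v) + t * (h$u - h$v)) * (h$u - h$v) * (h$u - h$v))))) (at t)"
  by (auto intro!: derivative_eq_intros simp: mult_ac)

lemma grad:
  fixes A :: "'v::finite \<Rightarrow> 'v \<Rightarrow> real"
  assumes "stable_state A \<theta>"
  shows "(\<Sum>u\<in>UNIV. \<Sum>v\<in>UNIV. A u v * (sin (\<theta>$u - \<theta>$v) * (h$u - h$v))) = 0"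
proof -
  have g: "(energy A has_derivative (\<lambda>h. 0)) (at \<theta>)" using assms by (simp add: stable_state_def)
  have l: "((\<lambda>t. \<theta> + t *\<^sub>R h) has_derivative (\<lambda>t. t *\<^sub>R h)) (at 0)"
    by (auto intro!: derivative_eq_intros)
  have g': "(energy A has_derivative (\<lambda>h. 0)) (at (\<theta> + 0 *\<^sub>R h))" using g by simp
  have "((\<lambda>t. energy A (\<theta> + t *\<^sub>R h)) has_derivative (\<lambda>t. 0)) (at 0)"
    using has_derivative_compose[OF l g'] by simp
  then have "((\<lambda>t. energy A (\<theta> + t *\<^sub>R h)) has_real_derivative 0) (at 0)"
  proof -
    have "(*) (0::real) = (\<lambda>t. 0)" by auto
    thus ?thesis using \<open>((\<lambda>t. energy A (\<theta> + t *\<^sub>R h)) has_derivative (\<lambda>t. 0)) (at 0)\<close>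
      by (simp add: has_field_derivative_def)
  qed
  from DERIV_unique[OF this d1[of A \<theta> h 0]] show ?thesis by simp
qed

lemma hess:
  fixes A :: "'v::finite \<Rightarrow> 'v \<Rightarrow> real"
  assumes "stable_state A \<theta>"
  shows "(\<Sum>u\<in>UNIV. \<Sum>v\<in>UNIV. A u v * (cos (\<theta>$u - \<theta>$v) * (h$u - h$v) * (h$u - h$v))) \<ge> 0"
proof -
  have "deriv (deriv (\<lambda>t. energy A (\<theta> + t *\<^sub>R h))) 0 \<ge> 0" using assms by (simp add: stable_state_def)
  moreover have "deriv (\<lambda>t. energy A (\<theta> + t *\<^sub>R h)) = (\<lambda>t. 1/2 * (\<Sum>u\<in>UNIV. \<Sum>v\<in>UNIV. A u v * (sin ((\<theta>$u - \<theta>$v) + t * (h$u - h$v)) * (h$u - h$v))))"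
    using d1 DERIV_imp_deriv by blast
  moreover have "deriv (\<lambda>t. 1/2 * (\<Sum>u\<in>UNIV. \<Sum>v\<in>UNIV. A u v * (sin ((\<theta>$u - \<theta>$v) + t * (h$u - h$v)) * (h$u - h$v)))) 0
     = 1/2 * (\<Sum>u\<in>UNIV. \<Sum>v\<in>UNIV. A u v * (cos (\<theta>$u - \<theta>$v) * (h$u - h$v) * (h$u - h$v)))"
    using DERIV_imp_deriv[OF d2[of A \<theta> h 0]] by simp
  ultimately show ?thesis by simp
qed


lemma sin_between:
  fixes a z :: real
  assumes "0 \<le> a" "a \<le> pi/2" "a \<le> z" "z \<le> pi - a"
  shows "sin a \<le> sin z"
proof (cases "z \<le> pi/2")
  case True thus ?thesis using assms by (intro sin_monotone_2pi_le) auto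
next
  case False
  have "sin a \<le> sin (pi - z)" using assms False by (intro sin_monotone_2pi_le) auto
  thus ?thesis by simp
qed

lemma key:
  fixes t y \<beta> \<gamma> :: real
  assumes "\<beta> \<le> t" "t < pi/2" "-pi \<le> y" "y \<le> pi" "\<not> (\<beta> \<le> \<bar>y\<bar> \<and> \<bar>y\<bar> < pi/2)"
    "0 < \<gamma>" "\<gamma> < \<beta>" "\<beta> \<le> pi/2"
  shows "sin (\<beta> - \<gamma>) * of_bool (\<bar>y\<bar> < \<gamma>) - of_bool (\<bar>y\<bar> \<ge> pi/2) \<le> sin (t - y)"
proof -
  consider "\<bar>y\<bar> \<ge> pi/2" | "\<bar>y\<bar> < \<gamma>" | "\<gamma> \<le> \<bar>y\<bar>" "\<bar>y\<bar> < \<beta>" using assms by linarith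
  thus ?thesis
  proof cases
    case 1
    then have "\<not> \<bar>y\<bar> < \<gamma>" using assms by linarith
    then show ?thesis using 1 by simp
  next
    case 2
    have "sin (\<beta> - \<gamma>) \<le> sin (t - y)"
      using 2 assms by (intro sin_between) (auto simp: abs_if split: if_splits)
    then show ?thesis using 2 assms by simp
  next
    case 3
    have "0 \<le> sin (t - y)" using 3 assms by (intro sin_ge_zero) (auto simp: abs_if split: if_splits)
    then show ?thesis using 3 assms by simp
  qed
qed

definition sg :: "real \<Rightarrow> real \<Rightarrow> real" where
  "sg \<beta> t = (if \<beta> \<le> t \<and> t < pi/2 then 1 else if -(pi/2) < t \<and> t \<le> -\<beta> then -1 else 0)"

lemma pw:
  fixes a b \<beta> \<gamma> :: real
  assumes "-pi \<le> a" "a \<le> pi" "-pi \<le> b" "b \<le> pi" "0 < \<gamma>" "\<gamma> < \<beta>" "\<beta> \<le> pi/2"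
  shows "of_bool (\<beta> \<le> \<bar>a\<bar> \<and> \<bar>a\<bar> < pi/2) * (sin (\<beta> - \<gamma>) * of_bool (\<bar>b\<bar> < \<gamma>) - of_bool (\<bar>b\<bar> \<ge> pi/2))
       + of_bool (\<beta> \<le> \<bar>b\<bar> \<and> \<bar>b\<bar> < pi/2) * (sin (\<beta> - \<gamma>) * of_bool (\<bar>a\<bar> < \<gamma>) - of_bool (\<bar>a\<bar> \<ge> pi/2))
       \<le> sin (a - b) * (sg \<beta> a - sg \<beta> b)"
proof -
  have kb: "sin (\<beta> - \<gamma>) * of_bool (\<bar>b\<bar> < \<gamma>) - of_bool (\<bar>b\<bar> \<ge> pi/2) \<le> sin (t - b)"
    if "\<beta> \<le> t" "t < pi/2" "\<not> (\<beta> \<le> \<bar>b\<bar> \<and> \<bar>b\<bar> < pi/2)" for t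
    using key[of \<beta> t b \<gamma>] that assms by auto
  have kb': "sin (\<beta> - \<gamma>) * of_bool (\<bar>b\<bar> < \<gamma>) - of_bool (\<bar>b\<bar> \<ge> pi/2) \<le> sin ((-t) - (-b))"
    if "\<beta> \<le> -t" "-t < pi/2" "\<not> (\<beta> \<le> \<bar>b\<bar> \<and> \<bar>b\<bar> < pi/2)" for t
    using key[of \<beta> "-t" "-b" \<gamma>] that assms by auto
  have ka: "sin (\<beta> - \<gamma>) * of_bool (\<bar>a\<bar> < \<gamma>) - of_bool (\<bar>a\<bar> \<ge> pi/2) \<le> sin (t - a)"
    if "\<beta> \<le> t" "t < pi/2" "\<not> (\<beta> \<le> \<bar>a\<bar> \<and> \<bar>a\<bar> < pi/2)" for t
    using key[of \<beta> t a \<gamma>] that assms by auto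
  have ka': "sin (\<beta> - \<gamma>) * of_bool (\<bar>a\<bar> < \<gamma>) - of_bool (\<bar>a\<bar> \<ge> pi/2) \<le> sin ((-t) - (-a))"
    if "\<beta> \<le> -t" "-t < pi/2" "\<not> (\<beta> \<le> \<bar>a\<bar> \<and> \<bar>a\<bar> < pi/2)" for t
    using key[of \<beta> "-t" "-a" \<gamma>] that assms by auto
  have s1: "sin (a - b) = - sin (b - a)" by (metis minus_diff_eq sin_minus)
  have s2: "sin (-a - -b) = sin (b - a)" by simp
  have s3: "sin (-b - -a) = sin (a - b)" by simp
  have pos: "0 \<le> sin (x - y)" if "\<beta> \<le> x" "x < pi/2" "-(pi/2) < y" "y \<le> -\<beta>" for x y
    using that assms by (intro sin_ge_zero) auto
  consider "\<beta> \<le> a \<and> a < pi/2" | "-(pi/2) < a \<and> a \<le> -\<beta>" | "\<not> (\<beta> \<le> \<bar>a\<bar> \<and> \<bar>a\<bar> < pi/2)"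
    by (smt (verit))
  note ca = this
  consider "\<beta> \<le> b \<and> b < pi/2" | "-(pi/2) < b \<and> b \<le> -\<beta>" | "\<not> (\<beta> \<le> \<bar>b\<bar> \<and> \<bar>b\<bar> < pi/2)"
    by (smt (verit))
  note cb = this
  show ?thesis
  proof (cases rule: ca)
    case 1
    then have A: "sg \<beta> a = 1" "\<beta> \<le> \<bar>a\<bar> \<and> \<bar>a\<bar> < pi/2" "\<not> \<bar>a\<bar> < \<gamma>" "\<not> \<bar>a\<bar> \<ge> pi/2"
      using assms by (auto simp: sg_def)
    show ?thesis
    proof (cases rule: cb)
      case 1
      then have "sg \<beta> b = 1" "\<beta> \<le> \<bar>b\<bar> \<and> \<bar>b\<bar> < pi/2" "\<not> \<bar>b\<bar> < \<gamma>" "\<not> \<bar>b\<bar> \<ge> pi/2"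
        using assms by (auto simp: sg_def)
      then show ?thesis using A by simp
    next
      case 2
      then have "sg \<beta> b = -1" "\<beta> \<le> \<bar>b\<bar> \<and> \<bar>b\<bar> < pi/2" "\<not> \<bar>b\<bar> < \<gamma>" "\<not> \<bar>b\<bar> \<ge> pi/2"
        using assms by (auto simp: sg_def)
      then show ?thesis using A pos[of a b] 1 2 by simp
    next
      case 3
      then have "sg \<beta> b = 0" using assms by (auto simp: sg_def)
      then show ?thesis using A 3 kb[of a] 1 by simp
    qed
  next
    case 2
    then have A: "sg \<beta> a = -1" "\<beta> \<le> \<bar>a\<bar> \<and> \<bar>a\<bar> < pi/2" "\<not> \<bar>a\<bar> < \<gamma>" "\<not> \<bar>a\<bar> \<ge> pi/2"
      using assms by (auto simp: sg_def)
    show ?thesis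
    proof (cases rule: cb)
      case 1
      then have "sg \<beta> b = 1" "\<beta> \<le> \<bar>b\<bar> \<and> \<bar>b\<bar> < pi/2" "\<not> \<bar>b\<bar> < \<gamma>" "\<not> \<bar>b\<bar> \<ge> pi/2"
        using assms by (auto simp: sg_def)
      then show ?thesis using A pos[of b a] 1 2 s1 by simp
    next
      case 2
      then have "sg \<beta> b = -1" "\<beta> \<le> \<bar>b\<bar> \<and> \<bar>b\<bar> < pi/2" "\<not> \<bar>b\<bar> < \<gamma>" "\<not> \<bar>b\<bar> \<ge> pi/2"
        using assms by (auto simp: sg_def)
      then show ?thesis using A by simp
    next
      case 3
      then have "sg \<beta> b = 0" using assms by (auto simp: sg_def)
      then show ?thesis using A 3 kb'[of a] 2 s1 s2 by simp
    qed
  next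
    case 3
    then have A: "\<not> (\<beta> \<le> \<bar>a\<bar> \<and> \<bar>a\<bar> < pi/2)" "sg \<beta> a = 0"
      using assms by (auto simp: sg_def)
    show ?thesis
    proof (cases rule: cb)
      case 1
      then have "sg \<beta> b = 1" "\<beta> \<le> \<bar>b\<bar> \<and> \<bar>b\<bar> < pi/2" "\<not> \<bar>b\<bar> < \<gamma>" "\<not> \<bar>b\<bar> \<ge> pi/2"
        using assms by (auto simp: sg_def)
      then show ?thesis using A 1 ka[of b] s1 by simp
    next
      case 2
      then have "sg \<beta> b = -1" "\<beta> \<le> \<bar>b\<bar> \<and> \<bar>b\<bar> < pi/2" "\<not> \<bar>b\<bar> < \<gamma>" "\<not> \<bar>b\<bar> \<ge> pi/2"
        using assms by (auto simp: sg_def)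
      then show ?thesis using A 2 ka'[of b] s3 by simp
    next
      case 3
      then have "sg \<beta> b = 0" using assms by (auto simp: sg_def)
      then show ?thesis using A 3 by (simp only: of_bool_eq, simp)
    qed
  qed
qed


lemma dl: "(\<Sum>u\<in>(UNIV::'v::finite set). \<Sum>w\<in>(UNIV::'w::finite set). if u = v then f w else 0) = (\<Sum>w\<in>UNIV. (f w :: real))"
  by (subst sum.swap) simp

lemma vertex_cos:
  fixes A :: "'v::finite \<Rightarrow> 'v \<Rightarrow> real"
  assumes "is_graph_adj A" "stable_state A \<theta>" "cos (\<theta>$v) \<le> 0"
  shows "(\<Sum>w\<in>UNIV. A v w * cos (\<theta>$w)) \<le> 0"
proof -
  have sym: "A u w = A w u" and diag: "A u u = 0" for u w using assms(1) by (auto simp: is_graph_adj_def)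
  define e :: "real^'v" where "e = (\<chi> w. if w = v then 1 else 0)"
  have e1: "A u w * (sin (\<theta>$u - \<theta>$w) * (e$u - e$w)) =
     (if u = v then A v w * sin (\<theta>$v - \<theta>$w) else 0) - (if w = v then A u v * sin (\<theta>$u - \<theta>$v) else 0)" for u w
    by (auto simp: e_def)
  have e2: "A u w * (cos (\<theta>$u - \<theta>$w) * (e$u - e$w) * (e$u - e$w)) =
     (if u = v then A v w * cos (\<theta>$v - \<theta>$w) else 0) + (if w = v then A u v * cos (\<theta>$u - \<theta>$v) else 0)" for u w
    by (auto simp: e_def diag)
  define S where "S = (\<Sum>w\<in>UNIV. A v w * sin (\<theta>$v - \<theta>$w))"
  define C where "C = (\<Sum>w\<in>UNIV. A v w * cos (\<theta>$v - \<theta>$w))"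
  have sS: "(\<Sum>u\<in>UNIV. A u v * sin (\<theta>$u - \<theta>$v)) = - S"
  proof -
    have "A u v * sin (\<theta>$u - \<theta>$v) = - (A v u * sin (\<theta>$v - \<theta>$u))" for u
      by (metis minus_diff_eq mult_minus_right sin_minus sym)
    thus ?thesis by (simp add: S_def sum_negf)
  qed
  have sC: "(\<Sum>u\<in>UNIV. A u v * cos (\<theta>$u - \<theta>$v)) = C"
  proof -
    have "A u v * cos (\<theta>$u - \<theta>$v) = A v u * cos (\<theta>$v - \<theta>$u)" for u
      by (metis minus_diff_eq cos_minus sym)
    thus ?thesis by (simp add: C_def)
  qed
  have "(\<Sum>u\<in>UNIV. \<Sum>w\<in>UNIV. A u w * (sin (\<theta>$u - \<theta>$w) * (e$u - e$w))) = 2 * S"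
    unfolding e1 by (simp add: sum_subtractf sS S_def dl)
  with grad[OF assms(2), of e] have S0: "S = 0" by simp
  have "(\<Sum>u\<in>UNIV. \<Sum>w\<in>UNIV. A u w * (cos (\<theta>$u - \<theta>$w) * (e$u - e$w) * (e$u - e$w))) = 2 * C"
    unfolding e2 by (simp add: sum.distrib sC C_def dl)
  with hess[OF assms(2), of e] have C0: "C \<ge> 0" by simp
  have "A v w * cos (\<theta>$w) = cos (\<theta>$v) * (A v w * cos (\<theta>$v - \<theta>$w)) + sin (\<theta>$v) * (A v w * sin (\<theta>$v - \<theta>$w))" for w
  proof -
    have "cos (\<theta>$w) = cos (\<theta>$v - (\<theta>$v - \<theta>$w))" by simp
    also have "\<dots> = cos (\<theta>$v) * cos (\<theta>$v - \<theta>$w) + sin (\<theta>$v) * sin (\<theta>$v - \<theta>$w)" by (rule cos_diff)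
    finally show ?thesis by (simp add: algebra_simps)
  qed
  hence "(\<Sum>w\<in>UNIV. A v w * cos (\<theta>$w)) = cos (\<theta>$v) * C + sin (\<theta>$v) * S"
    by (simp add: sum.distrib sum_distrib_left C_def S_def)
  thus ?thesis using S0 C0 assms(3) by (simp add: mult_nonpos_nonneg)
qed


lemma eb_sum:
  fixes A :: "'v::finite \<Rightarrow> 'v \<Rightarrow> real"
  shows "edges_between A X Y = (\<Sum>x\<in>UNIV. \<Sum>y\<in>UNIV. A x y * (of_bool (x \<in> X) * of_bool (y \<in> Y)))"
proof -
  have "(\<Sum>y\<in>UNIV. A x y * (of_bool (x \<in> X) * of_bool (y \<in> Y))) = of_bool (x \<in> X) * (\<Sum>y\<in>Y. A x y)" for x
    by (simp add: sum_distrib_left mult_ac)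
  hence "(\<Sum>x\<in>UNIV. \<Sum>y\<in>UNIV. A x y * (of_bool (x \<in> X) * of_bool (y \<in> Y))) = (\<Sum>x\<in>X. \<Sum>y\<in>Y. A x y)"
    by simp
  thus ?thesis by (simp add: edges_between_def)
qed

lemma cos_nonpos:
  fixes x :: real
  assumes "pi/2 \<le> \<bar>x\<bar>" "\<bar>x\<bar> \<le> pi"
  shows "cos x \<le> 0"
proof -
  have "cos x = cos \<bar>x\<bar>" by (simp add: abs_if)
  also have "\<dots> = sin (pi/2 - \<bar>x\<bar>)" by (simp add: sin_cos_eq)
  also have "\<dots> = - sin (\<bar>x\<bar> - pi/2)" by (metis minus_diff_eq sin_minus)
  also have "\<dots> \<le> 0" using assms by (simp add: sin_ge_zero)
  finally show ?thesis .
qed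

lemma swap_sym:
  fixes A :: "'v::finite \<Rightarrow> 'v \<Rightarrow> real"
  assumes "\<And>u w. A u w = A w u"
  shows "(\<Sum>x\<in>UNIV. \<Sum>y\<in>UNIV. A x y * f x y) = (\<Sum>x\<in>UNIV. \<Sum>y\<in>UNIV. A x y * f y x)"
  by (subst sum.swap) (simp add: assms)

theorem lemma2p9:
  fixes A :: "'v::finite \<Rightarrow> 'v \<Rightarrow> real" and \<theta> :: "real^'v" and \<beta> \<gamma> :: real
  assumes "is_graph_adj A"
    and "\<forall>v. - pi < \<theta>$v \<and> \<theta>$v \<le> pi"
    and "stable_state A \<theta>"
    and "rho1 \<theta> \<in> complex_of_real ` {0..1}"
    and "0 < \<gamma>" and "\<gamma> < \<beta>" and "\<beta> \<le> pi/2"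
  shows "edges_between A (Cset \<theta> \<beta>) (Cset \<theta> \<beta>) \<ge> edges_between A (Cset \<theta> (pi/2)) (Cset \<theta> \<beta>)
       \<and> edges_between A (Cset \<theta> (pi/2)) (Cset \<theta> \<beta>)
           \<ge> sin (\<beta> - \<gamma>) * edges_between A (Cset \<theta> \<beta>) (- Cset \<theta> \<gamma>)"
proof -
  have sym: "\<And>u w. A u w = A w u" and diag: "\<And>u. A u u = 0" and nn: "\<And>u w. A u w \<ge> 0"
    using assms(1) unfolding is_graph_adj_def by (metis order.refl zero_le_one)+
  have rng: "-pi \<le> \<theta>$v" "\<theta>$v \<le> pi" for v using assms(2) by (auto simp: less_imp_le)
  define D where "D = {v. \<beta> \<le> \<bar>\<theta>$v\<bar> \<and> \<bar>\<theta>$v\<bar> < pi/2}"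
  define Q where "Q = Cset \<theta> (pi/2)"
  define G where "G = - Cset \<theta> \<gamma>"
  define Cb where "Cb = Cset \<theta> \<beta>"
  define \<sigma> where "\<sigma> = sin (\<beta> - \<gamma>)"
  have Q_iff: "x \<in> Q \<longleftrightarrow> \<bar>\<theta>$x\<bar> \<ge> pi/2" for x by (simp add: Q_def Cset_def)
  have G_iff: "x \<in> G \<longleftrightarrow> \<bar>\<theta>$x\<bar> < \<gamma>" for x by (auto simp: G_def Cset_def)
  have D_iff: "x \<in> D \<longleftrightarrow> \<beta> \<le> \<bar>\<theta>$x\<bar> \<and> \<bar>\<theta>$x\<bar> < pi/2" for x by (simp add: D_def)
  have Cb_split: "of_bool (y \<in> Cb) = (of_bool (y \<in> D) + of_bool (y \<in> Q) :: real)" for y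
    using assms(7) by (auto simp: Cb_def Cset_def D_iff Q_iff)
  have QsubCb: "Q \<subseteq> Cb" using assms(7) by (auto simp: Cb_def Cset_def Q_iff)
  have first: "edges_between A Q Cb \<le> edges_between A Cb Cb"
    unfolding eb_sum
    by (intro sum_mono mult_left_mono) (use QsubCb nn in auto)
  define s :: "real^'v" where "s = (\<chi> v. sg \<beta> (\<theta>$v))"
  define k where "k y = \<sigma> * of_bool (y \<in> G) - of_bool (y \<in> Q)" for y
  have pwA: "A x y * (of_bool (x \<in> D) * k y + of_bool (y \<in> D) * k x)
      \<le> A x y * (sin (\<theta>$x - \<theta>$y) * (s$x - s$y))" for x y
    using pw[of "\<theta>$x" "\<theta>$y" \<gamma> \<beta>] rng[of x] rng[of y] assms(5-7)
    by (intro mult_left_mono) (auto simp: nn k_def \<sigma>_def s_def D_iff G_iff Q_iff)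
  have "(\<Sum>x\<in>UNIV. \<Sum>y\<in>UNIV. A x y * (of_bool (x \<in> D) * k y + of_bool (y \<in> D) * k x)) \<le> 0"
  proof -
    have "(\<Sum>x\<in>UNIV. \<Sum>y\<in>UNIV. A x y * (of_bool (x \<in> D) * k y + of_bool (y \<in> D) * k x))
      \<le> (\<Sum>x\<in>UNIV. \<Sum>y\<in>UNIV. A x y * (sin (\<theta>$x - \<theta>$y) * (s$x - s$y)))"
      by (intro sum_mono pwA)
    thus ?thesis using grad[OF assms(3), of s] by simp
  qed
  moreover have "(\<Sum>x\<in>UNIV. \<Sum>y\<in>UNIV. A x y * (of_bool (x \<in> D) * k y + of_bool (y \<in> D) * k x))
     = 2 * (\<Sum>x\<in>UNIV. \<Sum>y\<in>UNIV. A x y * (of_bool (x \<in> D) * k y))"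
    using swap_sym[OF sym, where f="\<lambda>x y. of_bool (x \<in> D) * k y"]
    by (simp add: distrib_left sum.distrib)
  ultimately have a0: "(\<Sum>x\<in>UNIV. \<Sum>y\<in>UNIV. A x y * (of_bool (x \<in> D) * k y)) \<le> 0" by simp
  have a: "\<sigma> * edges_between A D G \<le> edges_between A D Q"
  proof -
    have "(\<Sum>x\<in>UNIV. \<Sum>y\<in>UNIV. A x y * (of_bool (x \<in> D) * k y)) = \<sigma> * edges_between A D G - edges_between A D Q"
      unfolding eb_sum k_def
      by (simp add: sum_subtractf sum_distrib_left algebra_simps)
    thus ?thesis using a0 by simp
  qed
  have b0: "- (A x y * cos (\<theta>$y)) \<le> A x y * (of_bool (y \<in> Q) - \<sigma> * of_bool (y \<in> G))" for x y
  proof -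
    have "- cos (\<theta>$y) \<le> of_bool (y \<in> Q) - \<sigma> * of_bool (y \<in> G)"
    proof (cases "y \<in> Q")
      case True
      then have "y \<notin> G" using assms(5-7) by (auto simp: Q_iff G_iff)
      then show ?thesis using True by simp
    next
      case False
      then have c0: "0 \<le> cos (\<theta>$y)" by (intro cos_ge_zero) (auto simp: Q_iff)
      show ?thesis
      proof (cases "y \<in> G")
        case True
        have "\<sigma> \<le> cos \<gamma>"
        proof -
          have "\<sigma> \<le> sin (pi/2 - \<gamma>)" unfolding \<sigma>_def using assms(5-7)
            by (intro sin_monotone_2pi_le) auto
          thus ?thesis by (simp add: sin_cos_eq)
        qed
        moreover have "cos \<gamma> \<le> cos \<bar>\<theta>$y\<bar>" using True assms(5-7)
          by (intro cos_monotone_0_pi_le) (auto simp: G_iff)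
        ultimately show ?thesis using False True by simp
      next
        case False2: False
        then show ?thesis using False c0 by simp
      qed
    qed
    thus ?thesis using nn[of x y] by (metis mult_left_mono minus_mult_right)
  qed
  have b: "\<sigma> * edges_between A Q G \<le> edges_between A Q Q"
  proof -
    have "0 \<le> (\<Sum>x\<in>Q. - (\<Sum>y\<in>UNIV. A x y * cos (\<theta>$y)))"
    proof (intro sum_nonneg)
      fix x assume "x \<in> Q"
      then have "cos (\<theta>$x) \<le> 0" using rng[of x]
        by (intro cos_nonpos) (auto simp: Q_iff)
      thus "0 \<le> - (\<Sum>y\<in>UNIV. A x y * cos (\<theta>$y))" using vertex_cos[OF assms(1,3)] by simp
    qed
    also have "\<dots> \<le> (\<Sum>x\<in>Q. \<Sum>y\<in>UNIV. A x y * (of_bool (y \<in> Q) - \<sigma> * of_bool (y \<in> G)))"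
      by (intro sum_mono) (simp add: sum_negf[symmetric] sum_mono b0)
    also have "\<dots> = edges_between A Q Q - \<sigma> * edges_between A Q G"
      by (simp add: edges_between_def right_diff_distrib sum_subtractf sum_distrib_left mult.assoc[symmetric] mult.commute[of _ \<sigma>])
    finally show ?thesis by simp
  qed
  have e1: "edges_between A Cb G = edges_between A D G + edges_between A Q G"
    unfolding eb_sum Cb_split by (simp add: algebra_simps sum.distrib)
  have e2: "edges_between A Q Cb = edges_between A Q D + edges_between A Q Q"
    unfolding eb_sum Cb_split by (simp add: algebra_simps sum.distrib)
  have e3: "edges_between A D Q = edges_between A Q D"
    unfolding eb_sum by (subst sum.swap) (simp add: sym mult_ac)
  have second: "\<sigma> * edges_between A Cb G \<le> edges_between A Q Cb"
    using a b e1 e2 e3 by (simp add: distrib_left)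
  show ?thesis using first second by (simp add: Q_def Cb_def G_def \<sigma>_def)
qed

end
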